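(* Let $A=\begin{bmatrix}a&b\\c&d\end{bmatrix}$ be a real $2\times 2$ matrix. Then: (1) $a$ is an interior L-eigenvalue of $A$ if and only if $b=0$ and either $a=d$ or $|a-d|<|c|$; (2) a real number $\lambda\neq a$ is an interior L-eigenvalue of $A$ if and only if $\lambda$ is a (real) root of $t^2-(a+d)t+(ad-bc)$, i.e. $\lambda\in\{\frac{a+d\pm\sqrt{(a-d)^2+4bc}}{2}\}\subseteq\mathbb{R}$, and $|b|<|a-\lambda|$; (3) $\lambda$ is a boundary L-eigenvalue of $A$ if and only if one of the following holds: (a) $\lambda=\frac{(a+d)+(b+c)}{2}$ and $a-d\le c-b$; (b) $\lambda=\frac{(a+d)-(b+c)}{2}$ and $a-d\le b-c$.
   Context: The Lorentz cone in $\mathbb{R}^2$ is $\mathcal{K}=\{(x_1,x_2)^T:\ |x_1|\le x_2\}$. For a real $2\times2$ matrix $A$, a real $\lambda$ is an L-eigenvalue of $A$ if there is a nonzero $x\in\mathcal{K}$ with $(A-\lambda I)x\in\mathcal{K}$ and $x^T(A-\lambda I)x=0$ ($x$ is an associated L-eigenvector). $\lambda$ is an interior L-eigenvalue if it has an associated L-eigenvector in the interior of $\mathcal{K}$, and a boundary L-eigenvalue if it has an associated L-eigenvector on the boundary of $\mathcal{K}$. *)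

theory Defs
  imports "HOL-Analysis.Analysis"
begin

definition lorentz_cone :: "(real^2) set" where
  "lorentz_cone = {x. \<bar>x $ 1\<bar> \<le> x $ 2}"

definition L_eigvec :: "real^2^2 \<Rightarrow> real \<Rightarrow> real^2 \<Rightarrow> bool" where
  "L_eigvec A l x \<longleftrightarrow> x \<noteq> 0 \<and> x \<in> lorentz_cone \<and>
     (A - l *\<^sub>R mat 1) *v x \<in> lorentz_cone \<and> x \<bullet> ((A - l *\<^sub>R mat 1) *v x) = 0"

definition L_eigenvalue :: "real^2^2 \<Rightarrow> real \<Rightarrow> bool" where
  "L_eigenvalue A l \<longleftrightarrow> (\<exists>x. L_eigvec A l x)"

definition interior_L_eigenvalue :: "real^2^2 \<Rightarrow> real \<Rightarrow> bool" where
  "interior_L_eigenvalue A l \<longleftrightarrow> (\<exists>x. L_eigvec A l x \<and> x \<in> interior lorentz_cone)"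

definition boundary_L_eigenvalue :: "real^2^2 \<Rightarrow> real \<Rightarrow> bool" where
  "boundary_L_eigenvalue A l \<longleftrightarrow> (\<exists>x. L_eigvec A l x \<and> x \<in> frontier lorentz_cone)"

definition mat2 :: "real \<Rightarrow> real \<Rightarrow> real \<Rightarrow> real \<Rightarrow> real^2^2" where
  "mat2 a b c d = vector [vector [a, b], vector [c, d]]"

end

theory Submission imports Defs begin


lemma mat2_mv1: "((mat2 a b c d - l *\<^sub>R mat 1) *v x) $ 1 = (a-l) * x$1 + b * x$2"
  by (simp add: mat2_def matrix_vector_mult_def sum_2 mat_def algebra_simps)
lemma mat2_mv2: "((mat2 a b c d - l *\<^sub>R mat 1) *v x) $ 2 = c * x$1 + (d-l) * x$2"
  by (simp add: mat2_def matrix_vector_mult_def sum_2 mat_def algebra_simps)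
lemma inner2: "(x::real^2) \<bullet> y = x$1*y$1 + x$2*y$2"
  by (simp add: inner_vec_def sum_2)
lemma zero2: "((x::real^2) = 0) \<longleftrightarrow> x$1 = 0 \<and> x$2 = 0"
  by (metis (mono_tags, lifting) exhaust_2 vec_eq_iff zero_index)

lemma Leig: "L_eigvec (mat2 a b c d) l x \<longleftrightarrow>
   \<not>(x$1 = 0 \<and> x$2 = 0) \<and> \<bar>x$1\<bar> \<le> x$2 \<and> \<bar>(a-l) * x$1 + b * x$2\<bar> \<le> c * x$1 + (d-l) * x$2
   \<and> x$1 * ((a-l) * x$1 + b * x$2) + x$2 * (c * x$1 + (d-l) * x$2) = 0"
  unfolding L_eigvec_def lorentz_cone_def by (simp add: inner2 zero2 mat2_mv1 mat2_mv2)

lemma ex2: "(\<exists>x::real^2. P (x$1) (x$2)) \<longleftrightarrow> (\<exists>x1 x2. P x1 x2)"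
proof
  assume "\<exists>x1 x2. P x1 x2" then obtain x1 x2 where "P x1 x2" by blast
  then show "\<exists>x::real^2. P (x$1) (x$2)" by (intro exI[of _ "vector [x1,x2]"]) simp
qed blast

lemma closedK: "closed lorentz_cone"
  unfolding lorentz_cone_def by (intro closed_Collect_le continuous_intros)

lemma interiorK: "interior lorentz_cone = {x. \<bar>x$1\<bar> < x$2}"
proof
  have "open {x::real^2. \<bar>x$1\<bar> < x$2}" by (intro open_Collect_less continuous_intros)
  moreover have "{x::real^2. \<bar>x$1\<bar> < x$2} \<subseteq> lorentz_cone" unfolding lorentz_cone_def by auto
  ultimately show "{x. \<bar>x$1\<bar> < x$2} \<subseteq> interior lorentz_cone" using interior_maximal by blast
next
  show "interior lorentz_cone \<subseteq> {x. \<bar>x$1\<bar> < x$2}"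
  proof
    fix x assume x: "x \<in> interior lorentz_cone"
    then obtain e where e: "e > 0" "ball x e \<subseteq> lorentz_cone" using mem_interior by blast
    let ?y = "x - (e/2) *\<^sub>R axis 2 1"
    have "dist x ?y < e" using e by (simp add: dist_norm)
    hence "?y \<in> lorentz_cone" using e by auto
    hence "\<bar>x$1\<bar> \<le> x$2 - e/2" by (simp add: lorentz_cone_def axis_def)
    thus "x \<in> {x. \<bar>x$1\<bar> < x$2}" using e by simp
  qed
qed

lemma frontierK: "frontier lorentz_cone = {x. \<bar>x$1\<bar> = x$2}"
  unfolding frontier_def closure_closed[OF closedK] interiorK by (auto simp: lorentz_cone_def)


lemma core:
  fixes x1 x2 y1 y2 :: real
  assumes "\<bar>x1\<bar> < x2" "\<bar>y1\<bar> \<le> y2" "x1*y1 + x2*y2 = 0"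
  shows "y1 = 0 \<and> y2 = 0"
proof -
  have a: "x2 * \<bar>y1\<bar> \<le> x2 * y2" using assms by (simp add: mult_left_mono)
  have b: "-(x1*y1) \<le> \<bar>x1\<bar> * \<bar>y1\<bar>" by (metis abs_ge_minus_self abs_mult)
  have c: "\<bar>x1\<bar> * \<bar>y1\<bar> \<le> x2 * \<bar>y1\<bar>" using assms by (simp add: mult_right_mono)
  have "x2*y2 = -(x1*y1)" using assms by linarith
  hence "\<bar>x1\<bar> * \<bar>y1\<bar> = x2 * \<bar>y1\<bar>" using a b c by linarith
  hence "y1 = 0" using assms(1) by auto
  thus ?thesis using assms by auto
qed

lemma int_eq: "interior_L_eigenvalue (mat2 a b c d) l \<longleftrightarrow>
  (\<exists>x1 x2. \<bar>x1\<bar> < x2 \<and> (a-l)*x1 + b*x2 = 0 \<and> c*x1 + (d-l)*x2 = 0)"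
proof -
  have "interior_L_eigenvalue (mat2 a b c d) l \<longleftrightarrow> (\<exists>x1 x2. (\<not>(x1 = 0 \<and> x2 = 0) \<and> \<bar>x1\<bar> \<le> x2 \<and> \<bar>(a-l) * x1 + b * x2\<bar> \<le> c * x1 + (d-l) * x2
   \<and> x1 * ((a-l) * x1 + b * x2) + x2 * (c * x1 + (d-l) * x2) = 0) \<and> \<bar>x1\<bar> < x2)"
    unfolding interior_L_eigenvalue_def interiorK mem_Collect_eq Leig
    using ex2[of "\<lambda>x1 x2. (\<not>(x1 = 0 \<and> x2 = 0) \<and> \<bar>x1\<bar> \<le> x2 \<and> \<bar>(a-l) * x1 + b * x2\<bar> \<le> c * x1 + (d-l) * x2
   \<and> x1 * ((a-l) * x1 + b * x2) + x2 * (c * x1 + (d-l) * x2) = 0) \<and> \<bar>x1\<bar> < x2"] by simp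
  also have "\<dots> \<longleftrightarrow> (\<exists>x1 x2. \<bar>x1\<bar> < x2 \<and> (a-l)*x1 + b*x2 = 0 \<and> c*x1 + (d-l)*x2 = 0)"
  proof (intro iff_exI)
    fix x1 x2
    show "(\<not>(x1 = 0 \<and> x2 = 0) \<and> \<bar>x1\<bar> \<le> x2 \<and> \<bar>(a-l) * x1 + b * x2\<bar> \<le> c * x1 + (d-l) * x2
   \<and> x1 * ((a-l) * x1 + b * x2) + x2 * (c * x1 + (d-l) * x2) = 0) \<and> \<bar>x1\<bar> < x2 \<longleftrightarrow>
      \<bar>x1\<bar> < x2 \<and> (a-l)*x1 + b*x2 = 0 \<and> c*x1 + (d-l)*x2 = 0"
      using core[of x1 x2 "(a-l) * x1 + b * x2" "c * x1 + (d-l) * x2"] by auto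
  qed
  finally show ?thesis .
qed

lemma bd_eq: "boundary_L_eigenvalue (mat2 a b c d) l \<longleftrightarrow>
  (\<exists>x1 x2. \<not>(x1 = 0 \<and> x2 = 0) \<and> \<bar>x1\<bar> = x2 \<and> \<bar>(a-l) * x1 + b * x2\<bar> \<le> c * x1 + (d-l) * x2
   \<and> x1 * ((a-l) * x1 + b * x2) + x2 * (c * x1 + (d-l) * x2) = 0)"
  unfolding boundary_L_eigenvalue_def frontierK mem_Collect_eq Leig
  using ex2[of "\<lambda>x1 x2. (\<not>(x1 = 0 \<and> x2 = 0) \<and> \<bar>x1\<bar> \<le> x2 \<and> \<bar>(a-l) * x1 + b * x2\<bar> \<le> c * x1 + (d-l) * x2
   \<and> x1 * ((a-l) * x1 + b * x2) + x2 * (c * x1 + (d-l) * x2) = 0) \<and> \<bar>x1\<bar> = x2"] by auto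

lemma part1: "(\<exists>x1 x2::real. \<bar>x1\<bar> < x2 \<and> (a-a)*x1 + b*x2 = 0 \<and> c*x1 + (d-a)*x2 = 0)
   \<longleftrightarrow> b = 0 \<and> (a = d \<or> \<bar>a - d\<bar> < \<bar>c\<bar>)"
proof
  assume "\<exists>x1 x2::real. \<bar>x1\<bar> < x2 \<and> (a-a)*x1 + b*x2 = 0 \<and> c*x1 + (d-a)*x2 = 0"
  then obtain x1 x2 where h: "\<bar>x1\<bar> < x2" "b*x2 = 0" "c*x1 + (d-a)*x2 = 0" by auto
  have "x2 > 0" using h by linarith
  hence b: "b = 0" using h by simp
  have "a = d \<or> \<bar>a - d\<bar> < \<bar>c\<bar>"
  proof (cases "a = d")
    case False
    have "c*x1 = (a-d)*x2" using h by (simp add: algebra_simps)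
    hence e: "\<bar>c\<bar>*\<bar>x1\<bar> = \<bar>a-d\<bar>*x2" using \<open>x2>0\<close> by (metis abs_mult abs_of_pos)
    have "\<bar>c\<bar>*\<bar>x1\<bar> \<le> \<bar>c\<bar>*x2" using h by (simp add: mult_left_mono)
    moreover have "c \<noteq> 0" using e False \<open>x2>0\<close> by auto
    hence "\<bar>c\<bar>*\<bar>x1\<bar> < \<bar>c\<bar>*x2" using h by simp
    hence "\<bar>a-d\<bar>*x2 < \<bar>c\<bar>*x2" using e by simp
    thus ?thesis using \<open>x2>0\<close> by (simp add: mult_less_cancel_right)
  qed simp
  thus "b = 0 \<and> (a = d \<or> \<bar>a - d\<bar> < \<bar>c\<bar>)" using b by simp
next
  assume h: "b = 0 \<and> (a = d \<or> \<bar>a - d\<bar> < \<bar>c\<bar>)"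
  show "\<exists>x1 x2::real. \<bar>x1\<bar> < x2 \<and> (a-a)*x1 + b*x2 = 0 \<and> c*x1 + (d-a)*x2 = 0"
  proof (cases "a = d")
    case True then show ?thesis using h by (intro exI[of _ 0] exI[of _ 1]) simp
  next
    case False
    hence "\<bar>a - d\<bar> < \<bar>c\<bar>" using h by simp
    hence "c \<noteq> 0" by auto
    show ?thesis using h \<open>c \<noteq> 0\<close> \<open>\<bar>a - d\<bar> < \<bar>c\<bar>\<close>
      by (intro exI[of _ "(a-d)/c"] exI[of _ 1]) (simp add: abs_divide divide_less_eq)
  qed
qed

lemma part2:
  assumes "l \<noteq> a"
  shows "(\<exists>x1 x2::real. \<bar>x1\<bar> < x2 \<and> (a-l)*x1 + b*x2 = 0 \<and> c*x1 + (d-l)*x2 = 0)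
   \<longleftrightarrow> l\<^sup>2 - (a + d) * l + (a * d - b * c) = 0 \<and> \<bar>b\<bar> < \<bar>a - l\<bar>"
proof
  assume "\<exists>x1 x2::real. \<bar>x1\<bar> < x2 \<and> (a-l)*x1 + b*x2 = 0 \<and> c*x1 + (d-l)*x2 = 0"
  then obtain x1 x2 where h: "\<bar>x1\<bar> < x2" "(a-l)*x1 + b*x2 = 0" "c*x1 + (d-l)*x2 = 0" by auto
  have p: "x2 > 0" using h by linarith
  have "(a-l)*x1 = -b*x2" using h by simp
  hence e: "\<bar>a-l\<bar>*\<bar>x1\<bar> = \<bar>b\<bar>*x2" using p by (metis abs_minus_cancel abs_mult abs_of_pos mult_minus_left)
  have "\<bar>a-l\<bar>*\<bar>x1\<bar> < \<bar>a-l\<bar>*x2" using h assms by simp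
  hence "\<bar>b\<bar> < \<bar>a-l\<bar>" using e p by (simp add: mult_less_cancel_right)
  moreover have "(a-l)*(c*x1 + (d-l)*x2) = 0" using h by simp
  hence "c*((a-l)*x1) + (a-l)*(d-l)*x2 = 0" by (simp add: algebra_simps)
  hence "c*(-b*x2) + (a-l)*(d-l)*x2 = 0" using \<open>(a-l)*x1 = -b*x2\<close> by simp
  hence "x2 * (l\<^sup>2 - (a + d) * l + (a * d - b * c)) = 0" by (simp add: algebra_simps power2_eq_square)
  hence "l\<^sup>2 - (a + d) * l + (a * d - b * c) = 0" using p by simp
  ultimately show "l\<^sup>2 - (a + d) * l + (a * d - b * c) = 0 \<and> \<bar>b\<bar> < \<bar>a - l\<bar>" by simp
next
  assume h: "l\<^sup>2 - (a + d) * l + (a * d - b * c) = 0 \<and> \<bar>b\<bar> < \<bar>a - l\<bar>"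
  have n: "a - l \<noteq> 0" using assms by simp
  have "c*(-b/(a-l)) + (d-l) = (l\<^sup>2 - (a + d) * l + (a * d - b * c))/(a-l)"
    using n by (simp add: field_simps power2_eq_square)
  hence "c*(-b/(a-l)) + (d-l)*1 = 0" using h by simp
  moreover have "\<bar>-b/(a-l)\<bar> < 1" using h n by (simp add: abs_divide divide_less_eq)
  moreover have "(a-l)*(-b/(a-l)) + b*1 = 0" using n by simp
  ultimately show "\<exists>x1 x2::real. \<bar>x1\<bar> < x2 \<and> (a-l)*x1 + b*x2 = 0 \<and> c*x1 + (d-l)*x2 = 0"
    by blast
qed

lemma part3: "(\<exists>x1 x2::real. \<not>(x1 = 0 \<and> x2 = 0) \<and> \<bar>x1\<bar> = x2 \<and> \<bar>(a-l) * x1 + b * x2\<bar> \<le> c * x1 + (d-l) * x2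
   \<and> x1 * ((a-l) * x1 + b * x2) + x2 * (c * x1 + (d-l) * x2) = 0) \<longleftrightarrow>
   ((l = ((a + d) + (b + c)) / 2 \<and> a - d \<le> c - b) \<or>
          (l = ((a + d) - (b + c)) / 2 \<and> a - d \<le> b - c))"
proof
  assume "\<exists>x1 x2::real. \<not>(x1 = 0 \<and> x2 = 0) \<and> \<bar>x1\<bar> = x2 \<and> \<bar>(a-l) * x1 + b * x2\<bar> \<le> c * x1 + (d-l) * x2
   \<and> x1 * ((a-l) * x1 + b * x2) + x2 * (c * x1 + (d-l) * x2) = 0"
  then obtain x1 x2 where h: "\<not>(x1 = 0 \<and> x2 = 0)" "\<bar>x1\<bar> = x2" "\<bar>(a-l) * x1 + b * x2\<bar> \<le> c * x1 + (d-l) * x2"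
   "x1 * ((a-l) * x1 + b * x2) + x2 * (c * x1 + (d-l) * x2) = 0" by blast
  have p: "x2 > 0" using h by auto
  show "((l = ((a + d) + (b + c)) / 2 \<and> a - d \<le> c - b) \<or>
          (l = ((a + d) - (b + c)) / 2 \<and> a - d \<le> b - c))"
  proof (cases "x1 \<ge> 0")
    case True
    hence x: "x1 = x2" using h by simp
    have "x2 * (x2 * (a + d + b + c - 2*l)) = 0" using h(4) unfolding x by (simp add: algebra_simps)
    hence l: "l = ((a + d) + (b + c)) / 2" using p by simp
    have "\<bar>(a-l+b) * x2\<bar> \<le> (c + d-l) * x2" using h(3) unfolding x by (simp add: algebra_simps)
    hence "\<bar>a-l+b\<bar> * x2 \<le> (c + d-l) * x2" using p by (simp add: abs_mult)
    hence "\<bar>a-l+b\<bar> \<le> c + d-l" using p by (simp add: mult_le_cancel_right)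
    thus ?thesis using l by auto
  next
    case False
    hence x: "x1 = -x2" using h by simp
    have "x2 * (x2 * (a + d - b - c - 2*l)) = 0" using h(4) unfolding x by (simp add: algebra_simps)
    hence l: "l = ((a + d) - (b + c)) / 2" using p by simp
    have "\<bar>(b-a+l) * x2\<bar> \<le> (d-l-c) * x2" using h(3) unfolding x by (simp add: algebra_simps)
    hence "\<bar>b-a+l\<bar> * x2 \<le> (d-l-c) * x2" using p by (simp add: abs_mult)
    hence "\<bar>b-a+l\<bar> \<le> d-l-c" using p by (simp add: mult_le_cancel_right)
    thus ?thesis using l by auto
  qed
next
  assume "((l = ((a + d) + (b + c)) / 2 \<and> a - d \<le> c - b) \<or>
          (l = ((a + d) - (b + c)) / 2 \<and> a - d \<le> b - c))"
  then show "\<exists>x1 x2::real. \<not>(x1 = 0 \<and> x2 = 0) \<and> \<bar>x1\<bar> = x2 \<and> \<bar>(a-l) * x1 + b * x2\<bar> \<le> c * x1 + (d-l) * x2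
   \<and> x1 * ((a-l) * x1 + b * x2) + x2 * (c * x1 + (d-l) * x2) = 0"
  proof
    assume "l = ((a + d) + (b + c)) / 2 \<and> a - d \<le> c - b"
    thus ?thesis by (intro exI[of _ 1] exI[of _ 1]) (auto simp: field_simps)
  next
    assume "l = ((a + d) - (b + c)) / 2 \<and> a - d \<le> b - c"
    thus ?thesis by (intro exI[of _ "-1"] exI[of _ 1]) (auto simp: field_simps)
  qed
qed

theorem theorem3p1:
  fixes a b c d :: real
  defines "A \<equiv> mat2 a b c d"
  shows "(interior_L_eigenvalue A a \<longleftrightarrow> b = 0 \<and> (a = d \<or> \<bar>a - d\<bar> < \<bar>c\<bar>))
    \<and> (\<forall>l::real. l \<noteq> a \<longrightarrow>
         (interior_L_eigenvalue A l \<longleftrightarrow>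
            l\<^sup>2 - (a + d) * l + (a * d - b * c) = 0 \<and> \<bar>b\<bar> < \<bar>a - l\<bar>))
    \<and> (\<forall>l::real. boundary_L_eigenvalue A l \<longleftrightarrow>
         ((l = ((a + d) + (b + c)) / 2 \<and> a - d \<le> c - b) \<or>
          (l = ((a + d) - (b + c)) / 2 \<and> a - d \<le> b - c)))"
  unfolding A_def int_eq bd_eq part3 using part1[of a b c d] part2 by blast

end
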